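(* For every $n\ge 1$, every orientation $\overrightarrow{K_{1,n}}$ of the star $K_{1,n}$ is $\{0,1\}$-antimagic.
   Context: An oriented graph $\overrightarrow{G}$ is a directed graph obtained from a simple undirected graph by giving each edge one direction. For vertices $u,v$, $d(u,v)$ is the length of a shortest directed path from $u$ to $v$ ($d(u,u)=0$, and $d(u,v)=\infty$ if there is no such path). Let $\partial=\max\{d(u,v)<\infty : u,v\in V(\overrightarrow{G})\}$. A distance set is a nonempty $D\subseteq\{0,1,\dots,\partial\}$. The $D$-neighborhood of $u$ is $N_D(u)=\{v : d(u,v)\in D\}$. For a bijection $f:V(\overrightarrow{G})\to\{1,\dots,|V(\overrightarrow{G})|\}$, the $D$-weight of $u$ is $\omega_D(u)=\sum_{v\in N_D(u)} f(v)$. $\overrightarrow{G}$ is $D$-antimagic if $D\subseteq\{0,\dots,\partial\}$ and there is such a bijection $f$ with all $D$-weights pairwise distinct. *)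

theory Defs
  imports Main "HOL-Library.Extended_Nat"
begin

inductive walk :: "('a \<times> 'a) set \<Rightarrow> 'a \<Rightarrow> 'a \<Rightarrow> nat \<Rightarrow> bool" for A where
  walk_nil: "walk A u u 0"
| walk_step: "(u, w) \<in> A \<Longrightarrow> walk A w v k \<Longrightarrow> walk A u v (Suc k)"

definition ddist :: "('a \<times> 'a) set \<Rightarrow> 'a \<Rightarrow> 'a \<Rightarrow> enat" where
  "ddist A u v = (if \<exists>k. walk A u v k then enat (LEAST k. walk A u v k) else \<infinity>)"

definition finite_diam :: "'a set \<Rightarrow> ('a \<times> 'a) set \<Rightarrow> nat" where
  "finite_diam V A = Max {k. \<exists>u\<in>V. \<exists>v\<in>V. ddist A u v = enat k}"

definition oriented_graph :: "'a set \<Rightarrow> ('a \<times> 'a) set \<Rightarrow> bool" where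
  "oriented_graph V A \<longleftrightarrow> finite V \<and> A \<subseteq> V \<times> V \<and>
     (\<forall>u. (u, u) \<notin> A) \<and> (\<forall>u v. (u, v) \<in> A \<longrightarrow> (v, u) \<notin> A)"

definition D_nbhd :: "('a \<times> 'a) set \<Rightarrow> 'a set \<Rightarrow> nat set \<Rightarrow> 'a \<Rightarrow> 'a set" where
  "D_nbhd A V D u = {v \<in> V. \<exists>k\<in>D. ddist A u v = enat k}"

definition D_weight :: "('a \<times> 'a) set \<Rightarrow> 'a set \<Rightarrow> nat set \<Rightarrow> ('a \<Rightarrow> nat) \<Rightarrow> 'a \<Rightarrow> nat" where
  "D_weight A V D f u = (\<Sum>v\<in>D_nbhd A V D u. f v)"

definition D_antimagic :: "'a set \<Rightarrow> ('a \<times> 'a) set \<Rightarrow> nat set \<Rightarrow> bool" where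
  "D_antimagic V A D \<longleftrightarrow> D \<noteq> {} \<and> D \<subseteq> {0..finite_diam V A} \<and>
     (\<exists>f. bij_betw f V {1..card V} \<and> inj_on (D_weight A V D f) V)"

definition star_orientation :: "'a set \<Rightarrow> ('a \<times> 'a) set \<Rightarrow> 'a \<Rightarrow> nat \<Rightarrow> bool" where
  "star_orientation V A c n \<longleftrightarrow> finite V \<and> c \<in> V \<and> card V = n + 1 \<and>
     A \<subseteq> ({c} \<times> (V - {c})) \<union> ((V - {c}) \<times> {c}) \<and>
     (\<forall>l\<in>V - {c}. ((c, l) \<in> A \<longleftrightarrow> (l, c) \<notin> A))"

end

theory Submission
  imports Defs
begin

lemma walk0: "walk A u v 0 \<longleftrightarrow> u = v"
  by (auto elim: walk.cases intro: walk.intros)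

lemma walk1: "walk A u v (Suc 0) \<longleftrightarrow> (u, v) \<in> A"
  by (auto elim!: walk.cases intro: walk.intros)

lemma ddist_eq: "ddist A u v = enat k \<longleftrightarrow> walk A u v k \<and> (\<forall>j<k. \<not> walk A u v j)"
proof
  assume h: "ddist A u v = enat k"
  have ex: "\<exists>k. walk A u v k"
  proof (rule ccontr)
    assume "\<not> (\<exists>k. walk A u v k)"
    then have "ddist A u v = \<infinity>" unfolding ddist_def by simp
    with h show False by simp
  qed
  have L: "(LEAST k. walk A u v k) = k" using h ex unfolding ddist_def by simp
  have w: "walk A u v (LEAST k. walk A u v k)" using ex by (rule LeastI_ex)
  have "\<not> walk A u v j" if "j < k" for j
    using not_less_Least[of j "walk A u v"] L that by simp
  then show "walk A u v k \<and> (\<forall>j<k. \<not> walk A u v j)" using w L by simp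
next
  assume h: "walk A u v k \<and> (\<forall>j<k. \<not> walk A u v j)"
  have "(LEAST k. walk A u v k) = k"
  proof (rule Least_equality)
    show "walk A u v k" using h by (rule conjunct1)
    fix y assume y: "walk A u v y"
    show "k \<le> y"
    proof (rule ccontr)
      assume "\<not> k \<le> y"
      then have "y < k" by simp
      with h y show False by blast
    qed
  qed
  then show "ddist A u v = enat k" using h unfolding ddist_def by auto
qed

lemma nbhd01:
  assumes "A \<subseteq> V \<times> V" "u \<in> V" "\<forall>x. (x, x) \<notin> A"
  shows "D_nbhd A V {0, 1} u = insert u {v. (u, v) \<in> A}"
proof -
  have a: "ddist A u v = enat 0 \<longleftrightarrow> u = v" for v
    using ddist_eq[of A u v 0] walk0[of A u v] by auto
  have b: "ddist A u v = enat 1 \<longleftrightarrow> (u, v) \<in> A \<and> u \<noteq> v" for v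
    using ddist_eq[of A u v 1] walk0[of A u v] walk1[of A u v] by (auto simp: less_Suc_eq)
  show ?thesis
  proof (rule set_eqI)
    fix v
    have "v \<in> D_nbhd A V {0, 1} u \<longleftrightarrow> v \<in> V \<and> (ddist A u v = enat 0 \<or> ddist A u v = enat 1)"
      unfolding D_nbhd_def by blast
    also have "\<dots> \<longleftrightarrow> v \<in> V \<and> (u = v \<or> ((u, v) \<in> A \<and> u \<noteq> v))"
      by (simp only: a b)
    also have "\<dots> \<longleftrightarrow> v \<in> insert u {v. (u, v) \<in> A}"
      using assms by blast
    finally show "v \<in> D_nbhd A V {0, 1} u \<longleftrightarrow> v \<in> insert u {v. (u, v) \<in> A}" .
  qed
qed


lemma weight01:
  assumes "finite V" "A \<subseteq> V \<times> V" "u \<in> V" "\<forall>x. (x, x) \<notin> A"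
  shows "D_weight A V {0, 1} f u = f u + (\<Sum>v\<in>{v. (u, v) \<in> A}. f v)"
proof -
  have fin: "finite {v. (u, v) \<in> A}"
    using assms(1,2) by (auto intro: finite_subset)
  have "u \<notin> {v. (u, v) \<in> A}" using assms(4) by auto
  then show ?thesis unfolding D_weight_def nbhd01[OF assms(2,3,4)]
    using fin by simp
qed

theorem mainTheorem2:
  fixes V :: "'a set" and A :: "('a \<times> 'a) set" and c :: 'a and n :: nat
  assumes "n \<ge> 1" and "star_orientation V A c n"
  shows "D_antimagic V A {0, 1}"
proof -
  have finV: "finite V" and cV: "c \<in> V" and cardV: "card V = n + 1"
    and Asub: "A \<subseteq> ({c} \<times> (V - {c})) \<union> ((V - {c}) \<times> {c})"
    and orient: "\<forall>l\<in>V - {c}. ((c, l) \<in> A \<longleftrightarrow> (l, c) \<notin> A)"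
    using assms(2) unfolding star_orientation_def by auto
  have AV: "A \<subseteq> V \<times> V" using Asub cV by auto
  have irr: "\<forall>x. (x, x) \<notin> A" using Asub by auto
  define Inn where "Inn = {l \<in> V - {c}. (l, c) \<in> A}"
  define Out where "Out = {l \<in> V - {c}. (c, l) \<in> A}"
  have IO: "Inn \<union> Out = V - {c}" using orient unfolding Inn_def Out_def by auto
  have IOd: "Inn \<inter> Out = {}" using orient unfolding Inn_def Out_def by auto
  have finI: "finite Inn" "finite Out" using finV unfolding Inn_def Out_def by auto
  have cardIO: "card Inn + card Out = n"
    using card_Un_disjoint[OF finI IOd] IO cardV cV finV by simp
  obtain gI where gI: "bij_betw gI Inn {1..card Inn}"
    using ex_bij_betw_nat_finite_1[OF finI(1)] bij_betw_inv by blast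
  obtain gO where gO: "bij_betw gO Out {1..card Out}"
    using ex_bij_betw_nat_finite_1[OF finI(2)] bij_betw_inv by blast
  define f where "f x = (if x = c then n + 1 else if x \<in> Inn then gI x else card Inn + gO x)" for x
  have cI: "c \<notin> Inn" "c \<notin> Out" unfolding Inn_def Out_def by auto
  have bI: "bij_betw f Inn {1..card Inn}"
  proof -
    have "bij_betw f Inn {1..card Inn} = bij_betw gI Inn {1..card Inn}"
      by (rule bij_betw_cong) (use cI in \<open>auto simp: f_def\<close>)
    then show ?thesis using gI by simp
  qed
  have shift: "bij_betw (\<lambda>k. card Inn + k) {1..card Out} {card Inn + 1..card Inn + card Out}"
    unfolding bij_betw_def
  proof
    show "inj_on (\<lambda>k. card Inn + k) {1..card Out}" by (auto simp: inj_on_def)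
    show "(\<lambda>k. card Inn + k) ` {1..card Out} = {card Inn + 1..card Inn + card Out}"
    proof
      show "{card Inn + 1..card Inn + card Out} \<subseteq> (\<lambda>k. card Inn + k) ` {1..card Out}"
      proof
        fix x assume "x \<in> {card Inn + 1..card Inn + card Out}"
        then show "x \<in> (\<lambda>k. card Inn + k) ` {1..card Out}"
          by (intro image_eqI[of _ _ "x - card Inn"]) auto
      qed
    qed auto
  qed
  have bO': "bij_betw (\<lambda>x. card Inn + gO x) Out {card Inn + 1..card Inn + card Out}"
    using bij_betw_trans[OF gO shift] by (simp add: comp_def)
  have bO: "bij_betw f Out {card Inn + 1..card Inn + card Out}"
  proof -
    have "bij_betw f Out {card Inn + 1..card Inn + card Out} = bij_betw (\<lambda>x. card Inn + gO x) Out {card Inn + 1..card Inn + card Out}"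
      by (rule bij_betw_cong) (use cI IOd in \<open>auto simp: f_def\<close>)
    then show ?thesis using bO' by simp
  qed
  have bc: "bij_betw f {c} {n + 1}" by (simp add: f_def bij_betw_def)
  have b1: "bij_betw f (Inn \<union> Out) ({1..card Inn} \<union> {card Inn + 1..card Inn + card Out})"
    by (rule bij_betw_combine[OF bI bO]) auto
  have b2: "bij_betw f ((Inn \<union> Out) \<union> {c}) (({1..card Inn} \<union> {card Inn + 1..card Inn + card Out}) \<union> {n + 1})"
    by (rule bij_betw_combine[OF b1 bc]) (use cardIO in auto)
  have e1: "(Inn \<union> Out) \<union> {c} = V" using IO cV by auto
  have e2: "({1..card Inn} \<union> {card Inn + 1..card Inn + card Out}) \<union> {n + 1} = {1..card V}"
    using cardIO cardV by auto
  have bij: "bij_betw f V {1..card V}" using b2 e1 e2 by simp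
  have fI: "x \<in> Inn \<Longrightarrow> 1 \<le> f x \<and> f x \<le> card Inn" for x
    using bI by (auto simp: bij_betw_def)
  have fO: "x \<in> Out \<Longrightarrow> card Inn + 1 \<le> f x \<and> f x \<le> n" for x
    using bO cardIO by (auto simp: bij_betw_def)
  have fc: "f c = n + 1" by (simp add: f_def)
  have injf: "inj_on f V" using bij by (auto simp: bij_betw_def)
  let ?W = "D_weight A V {0, 1} f"
  have Nc: "{v. (c, v) \<in> A} = Out" using Asub unfolding Out_def by auto
  have NI: "x \<in> Inn \<Longrightarrow> {v. (x, v) \<in> A} = {c}" for x using Asub unfolding Inn_def by auto
  have NO: "x \<in> Out \<Longrightarrow> {v. (x, v) \<in> A} = {}" for x
    using Asub orient unfolding Out_def by auto
  have Wc: "?W c = n + 1 + sum f Out" using weight01[OF finV AV cV irr] Nc fc by simp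
  have WI: "x \<in> Inn \<Longrightarrow> ?W x = f x + (n + 1)" for x
    using weight01[OF finV AV _ irr, of x] NI[of x] fc unfolding Inn_def by simp
  have WO: "x \<in> Out \<Longrightarrow> ?W x = f x" for x
    using weight01[OF finV AV _ irr, of x] NO[of x] unfolding Out_def by simp
  have sumO: "x \<in> Inn \<Longrightarrow> sum f Out \<noteq> f x" for x
  proof (cases "Out = {}")
    case True
    assume "x \<in> Inn" then show ?thesis using True fI[of x] by auto
  next
    case False
    then obtain o1 where o1: "o1 \<in> Out" by auto
    assume "x \<in> Inn"
    have "f o1 \<le> sum f Out" using o1 finI(2) by (intro member_le_sum) auto
    then show ?thesis using fO[OF o1] fI[OF \<open>x \<in> Inn\<close>] by auto
  qed
  have Vcases: "x \<in> V \<Longrightarrow> x = c \<or> x \<in> Inn \<or> x \<in> Out" for x using IO by auto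
  have inj: "inj_on ?W V"
  proof (rule inj_onI)
    fix x y assume x: "x \<in> V" and y: "y \<in> V" and eq: "?W x = ?W y"
    have k1: "x \<in> Inn \<Longrightarrow> y \<in> Inn \<Longrightarrow> x = y"
    proof -
      assume h: "x \<in> Inn" "y \<in> Inn"
      then have "f x = f y" using eq WI[OF h(1)] WI[OF h(2)] by simp
      then show "x = y" using injf x y by (meson inj_onD)
    qed
    have k2: "x \<in> Out \<Longrightarrow> y \<in> Out \<Longrightarrow> x = y"
    proof -
      assume h: "x \<in> Out" "y \<in> Out"
      then have "f x = f y" using eq WO[OF h(1)] WO[OF h(2)] by simp
      then show "x = y" using injf x y by (meson inj_onD)
    qed
    have k3: "x \<in> Inn \<Longrightarrow> y \<in> Out \<Longrightarrow> False"
    proof -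
      assume h: "x \<in> Inn" "y \<in> Out"
      then show False using eq WI[OF h(1)] WO[OF h(2)] fO[OF h(2)] by simp
    qed
    have k4: "x \<in> Out \<Longrightarrow> y \<in> Inn \<Longrightarrow> False"
    proof -
      assume h: "x \<in> Out" "y \<in> Inn"
      then show False using eq WI[OF h(2)] WO[OF h(1)] fO[OF h(1)] by simp
    qed
    have k5: "z \<in> Inn \<Longrightarrow> ?W c = ?W z \<Longrightarrow> False" for z
    proof -
      assume h: "z \<in> Inn" "?W c = ?W z"
      then show False using Wc WI[OF h(1)] sumO[OF h(1)] by simp
    qed
    have k6: "z \<in> Out \<Longrightarrow> ?W c = ?W z \<Longrightarrow> False" for z
    proof -
      assume h: "z \<in> Out" "?W c = ?W z"
      then show False using Wc WO[OF h(1)] fO[OF h(1)] by simp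
    qed
    from Vcases[OF x] show "x = y"
    proof (elim disjE)
      assume xc: "x = c"
      from Vcases[OF y] show "x = y"
      proof (elim disjE)
        assume "y = c" then show ?thesis using xc by simp
      next
        assume "y \<in> Inn" then show ?thesis using k5[of y] eq xc by simp
      next
        assume "y \<in> Out" then show ?thesis using k6[of y] eq xc by simp
      qed
    next
      assume xi: "x \<in> Inn"
      from Vcases[OF y] show "x = y"
      proof (elim disjE)
        assume "y = c" then show ?thesis using k5[of x] eq xi by simp
      next
        assume "y \<in> Inn" then show ?thesis using k1 xi by simp
      next
        assume "y \<in> Out" then show ?thesis using k3 xi by simp
      qed
    next
      assume xo: "x \<in> Out"
      from Vcases[OF y] show "x = y"
      proof (elim disjE)
        assume "y = c" then show ?thesis using k6[of x] eq xo by simp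
      next
        assume "y \<in> Inn" then show ?thesis using k4 xo by simp
      next
        assume "y \<in> Out" then show ?thesis using k2 xo by simp
      qed
    qed
  qed
  have "card (V - {c}) = n" using cardV cV finV by simp
  then have "V - {c} \<noteq> {}" using assms(1) by (intro notI) simp
  then obtain l where l: "l \<in> V - {c}" by blast
  have "\<exists>u v. (u, v) \<in> A \<and> u \<noteq> v" using l orient by blast
  then obtain u v where uv: "(u, v) \<in> A" "u \<noteq> v" by blast
  have d1: "ddist A u v = enat 1"
    using ddist_eq[of A u v 1] walk0[of A u v] walk1[of A u v] uv by (auto simp: less_Suc_eq)
  have finS: "finite {k. \<exists>u\<in>V. \<exists>v\<in>V. ddist A u v = enat k}"
  proof (rule finite_subset)
    show "{k. \<exists>u\<in>V. \<exists>v\<in>V. ddist A u v = enat k} \<subseteq> (\<lambda>(u, v). the_enat (ddist A u v)) ` (V \<times> V)"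
    proof
      fix k assume "k \<in> {k. \<exists>u\<in>V. \<exists>v\<in>V. ddist A u v = enat k}"
      then obtain u v where "u \<in> V" "v \<in> V" "ddist A u v = enat k" by blast
      then show "k \<in> (\<lambda>(u, v). the_enat (ddist A u v)) ` (V \<times> V)"
        by (intro image_eqI[where x="(u, v)"]) auto
    qed
    show "finite ((\<lambda>(u, v). the_enat (ddist A u v)) ` (V \<times> V))" using finV by simp
  qed
  have "1 \<le> finite_diam V A" unfolding finite_diam_def
    using uv AV d1 by (intro Max_ge[OF finS]) auto
  then have "{0, 1} \<subseteq> {0..finite_diam V A}" by auto
  then show ?thesis unfolding D_antimagic_def using bij inj by blast
qed

end
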